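(* Let $n>2$ and $V=\mathbb{F}_2^n$. The number of elementary abelian regular subgroups $R$ of $\mathrm{Sym}(V)$ such that $R\cap T$ has index $4$ in $T$ is $$t_n=\frac{(2^{n-2}-1)(2^{n-1}-1)(2^n-1)}{3}.$$
   Context: $T=\{\sigma_v:v\in V\}\le\mathrm{Sym}(V)$ is the group of translations $\sigma_v:x\mapsto x+v$. *)

theory Defs
  imports "HOL-Algebra.Bij"
begin

text \<open>The vector space V = F_2^n, realised as boolean lists of length n
  (False = 0, True = 1, addition = componentwise exclusive or).\<close>

definition Vn :: "nat \<Rightarrow> bool list set" where
  "Vn n = {xs. length xs = n}"

definition vadd :: "bool list \<Rightarrow> bool list \<Rightarrow> bool list" where
  "vadd x v = map2 (\<lambda>a b. a \<noteq> b) x v"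

text \<open>Sym(V) is the group BijGroup (Vn n); the translation sigma_v maps x to x + v.\<close>

definition transl :: "nat \<Rightarrow> bool list \<Rightarrow> (bool list \<Rightarrow> bool list)" where
  "transl n v = (\<lambda>x \<in> Vn n. vadd x v)"

definition transl_group :: "nat \<Rightarrow> (bool list \<Rightarrow> bool list) set" where
  "transl_group n = transl n ` Vn n"

definition elementary_abelian_subgroup :: "'a set \<Rightarrow> ('a, 'b) monoid_scheme \<Rightarrow> bool" where
  "elementary_abelian_subgroup H G \<longleftrightarrow>
     subgroup H G \<and> (\<forall>x\<in>H. \<forall>y\<in>H. x \<otimes>\<^bsub>G\<^esub> y = y \<otimes>\<^bsub>G\<^esub> x) \<and> (\<forall>x\<in>H. x \<otimes>\<^bsub>G\<^esub> x = \<one>\<^bsub>G\<^esub>)"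

definition regular_on :: "'a set \<Rightarrow> ('a \<Rightarrow> 'a) set \<Rightarrow> bool" where
  "regular_on S R \<longleftrightarrow> (\<forall>x\<in>S. \<forall>y\<in>S. \<exists>!g. g \<in> R \<and> g x = y)"

end

theory Submission imports Defs begin

definition zv :: "nat \<Rightarrow> bool list" where "zv n = replicate n False"
definition smul :: "bool \<Rightarrow> bool list \<Rightarrow> bool list" where "smul c d = map (\<lambda>a. c \<and> a) d"
fun dot :: "bool list \<Rightarrow> bool list \<Rightarrow> bool" where
  "dot (a#u) (b#x) = ((a \<and> b) \<noteq> dot u x)"
| "dot _ _ = False"
definition ev :: "nat \<Rightarrow> nat \<Rightarrow> bool list" where "ev n i = map (\<lambda>j. j = i) [0..<n]"

lemma length_vadd[simp]: "length (vadd x y) = min (length x) (length y)"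
  by (simp add: vadd_def)
lemma nth_vadd[simp]: "i < length x \<Longrightarrow> i < length y \<Longrightarrow> vadd x y ! i = (x!i \<noteq> y!i)"
  by (simp add: vadd_def)
lemma Vn_iff[simp]: "x \<in> Vn n \<longleftrightarrow> length x = n" by (simp add: Vn_def)
lemma zv_V[simp]: "zv n \<in> Vn n" "length (zv n) = n" by (auto simp: zv_def)
lemma length_smul[simp]: "length (smul c d) = length d" by (simp add: smul_def)
lemma nth_smul[simp]: "i < length d \<Longrightarrow> smul c d ! i = (c \<and> d!i)" by (simp add: smul_def)
lemma length_ev[simp]: "length (ev n i) = n" by (simp add: ev_def)
lemma nth_ev[simp]: "j < n \<Longrightarrow> ev n i ! j = (j = i)" by (simp add: ev_def)
lemma nth_zv[simp]: "j < n \<Longrightarrow> zv n ! j = False" by (simp add: zv_def)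

lemma veq: "length x = n \<Longrightarrow> length y = n \<Longrightarrow> (\<And>i. i < n \<Longrightarrow> x!i = y!i) \<Longrightarrow> x = y"
  by (simp add: list_eq_iff_nth_eq)

lemma vadd_comm: "vadd x y = vadd y x"
  by (rule nth_equalityI) auto
lemma vadd_assoc: "vadd (vadd x y) z = vadd x (vadd y z)"
  by (rule nth_equalityI) auto
lemma vadd_left_commute: "vadd x (vadd y z) = vadd y (vadd x z)"
  by (rule nth_equalityI) auto
lemmas vadd_ac = vadd_assoc vadd_comm vadd_left_commute
lemma vadd_zv[simp]: "length x = n \<Longrightarrow> vadd x (zv n) = x" "length x = n \<Longrightarrow> vadd (zv n) x = x"
  by (rule nth_equalityI; simp)+
lemma vadd_self[simp]: "length x = n \<Longrightarrow> vadd x x = zv n"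
  by (rule nth_equalityI) auto
lemma vadd_self2[simp]: "length x = length y \<Longrightarrow> vadd x (vadd x y) = y"
  by (rule nth_equalityI) auto
lemma vadd_self3[simp]: "length x = length y \<Longrightarrow> vadd (vadd y x) x = y"
  by (rule nth_equalityI) auto
lemma vadd_eq_zv: "length x = n \<Longrightarrow> length y = n \<Longrightarrow> vadd x y = zv n \<longleftrightarrow> x = y"
  by (auto simp: list_eq_iff_nth_eq)
lemma smul_True[simp]: "smul True d = d" and smul_False[simp]: "smul False d = zv (length d)"
  by (simp_all add: smul_def zv_def map_replicate_const)

lemma dot_vadd: "length u = length x \<Longrightarrow> length x = length y \<Longrightarrow>
   dot u (vadd x y) = (dot u x \<noteq> dot u y)"
proof (induction u arbitrary: x y)
  case Nil then show ?case by simp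
next
  case (Cons a u)
  then obtain b x' c y' where "x = b#x'" "y = c#y'" by (cases x; cases y; auto)
  with Cons show ?case by (auto simp: vadd_def)
qed
lemma dot_comm: "dot u x = dot x u"
  by (induction u x rule: dot.induct) auto
lemma dot_vadd1: "length u = length x \<Longrightarrow> length u = length y \<Longrightarrow>
   dot (vadd u y) x = (dot u x \<noteq> dot y x)"
  by (simp add: dot_comm dot_vadd)
lemma dot_zv[simp]: "dot u (zv n) = False"
  by (induction u arbitrary: n) (auto simp: zv_def, case_tac n, auto)
lemma dot_zv1[simp]: "dot (zv n) u = False"
  by (subst dot_comm) simp
lemma dot_smul: "dot u (smul c x) = (c \<and> dot u x)"
  by (induction u x rule: dot.induct) (auto simp: smul_def)

lemma dot_smul1: "dot (smul c u) x = (c \<and> dot u x)"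
  by (simp add: dot_comm[of _ x] dot_smul)

lemma dot_single: "length x = length u \<Longrightarrow> k < length u \<Longrightarrow> (\<And>j. j < length u \<Longrightarrow> j \<noteq> k \<Longrightarrow> \<not> x!j)
   \<Longrightarrow> dot u x = (u!k \<and> x!k)"
proof (induction u arbitrary: x k)
  case Nil then show ?case by simp
next
  case (Cons a u)
  then obtain b x' where x: "x = b#x'" by (cases x) auto
  show ?case
  proof (cases k)
    case 0
    have "x' = zv (length u)"
    proof (rule veq)
      fix i assume "i < length u"
      then show "x'!i = zv (length u) ! i" using Cons.prems(3)[of "Suc i"] x 0 by simp
    qed (use Cons.prems x in auto)
    then show ?thesis using x 0 by simp
  next
    case (Suc k')
    have "dot u x' = (u!k' \<and> x'!k')" using Cons.prems x Suc by (intro Cons.IH) force+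
    moreover have "\<not> b" using Cons.prems(3)[of 0] x Suc by simp
    ultimately show ?thesis using x Suc by simp
  qed
qed

lemma dot_ev[simp]: "length u = n \<Longrightarrow> k < n \<Longrightarrow> dot u (ev n k) = u!k"
  by (subst dot_single[of _ _ k]) auto

lemma card_V: "card (Vn n) = 2^n"
proof -
  have "Vn n = {xs. set xs \<subseteq> (UNIV::bool set) \<and> length xs = n}" by (auto simp: Vn_def)
  then show ?thesis using card_lists_length_eq[of "UNIV::bool set" n] by simp
qed
lemma finite_V[simp]: "finite (Vn n)"
  using card_V[of n] card.infinite by fastforce

lemma finite_Vsub[simp]: "finite {x::bool list. length x = n \<and> P x}"
  by (rule finite_subset[OF _ finite_V[of n]]) (auto simp: Vn_def)

lemma func_rep:
  assumes p: "\<And>x y. x \<in> Vn n \<Longrightarrow> y \<in> Vn n \<Longrightarrow> p (vadd x y) = (p x \<noteq> p y)"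
  shows "\<exists>u\<in>Vn n. \<forall>x\<in>Vn n. p x = dot u x"
proof -
  define u where "u = map (\<lambda>i. p (ev n i)) [0..<n]"
  have p0: "p (zv n) = False" using p[of "zv n" "zv n"] by simp
  define tr where "tr k x = map (\<lambda>j. j < k \<and> x!j) [0..<n]" for k x
  have tr: "k \<le> n \<Longrightarrow> p (tr k x) = dot u (tr k x)" for k x
  proof (induction k)
    case 0
    have "tr 0 x = zv n" by (simp add: tr_def zv_def map_replicate_const)
    then show ?case using p0 by simp
  next
    case (Suc k)
    have e: "tr (Suc k) x = vadd (tr k x) (smul (x!k) (ev n k))"
      by (rule veq[of _ n]) (auto simp: tr_def less_Suc_eq)
    have ps: "p (smul c (ev n k)) = (c \<and> p (ev n k))" for c
      by (cases c) (use p0 in \<open>auto simp: zv_def\<close>)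
    have "p (tr (Suc k) x) = (p (tr k x) \<noteq> p (smul (x!k) (ev n k)))"
      unfolding e by (rule p) (auto simp: tr_def)
    also have "\<dots> = (dot u (tr k x) \<noteq> dot u (smul (x!k) (ev n k)))"
      using Suc by (simp add: ps dot_smul u_def)
    also have "\<dots> = dot u (tr (Suc k) x)" unfolding e
      by (rule dot_vadd[symmetric]) (auto simp: tr_def u_def)
    finally show ?case .
  qed
  have "\<forall>x\<in>Vn n. p x = dot u x"
  proof
    fix x assume x: "x \<in> Vn n"
    have "tr n x = x" using x by (intro veq) (auto simp: tr_def)
    then show "p x = dot u x" using tr[of n x] by simp
  qed
  moreover have "u \<in> Vn n" by (simp add: u_def)
  ultimately show ?thesis by blast
qed

lemma dot_inj: "u \<in> Vn n \<Longrightarrow> u' \<in> Vn n \<Longrightarrow> (\<And>x. x \<in> Vn n \<Longrightarrow> dot u x = dot u' x) \<Longrightarrow> u = u'"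
proof -
  assume a: "u \<in> Vn n" "u' \<in> Vn n" "\<And>x. x \<in> Vn n \<Longrightarrow> dot u x = dot u' x"
  show ?thesis
  proof (rule veq[of _ n])
    fix i assume "i < n"
    then show "u!i = u'!i" using dot_ev[of u n i] dot_ev[of u' n i] a a(3)[of "ev n i"] by simp
  qed (use a in auto)
qed

lemma nonzero_idx: "a \<in> Vn n \<Longrightarrow> a \<noteq> zv n \<Longrightarrow> \<exists>i<n. a!i"
proof (rule ccontr)
  assume "a \<in> Vn n" "a \<noteq> zv n" "\<not> (\<exists>i<n. a!i)"
  then have "a = zv n" by (intro veq) auto
  then show False using \<open>a \<noteq> zv n\<close> by simp
qed

lemma exz: assumes "a \<in> Vn n" "b \<in> Vn n" "a \<noteq> zv n" "a \<noteq> b"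
  shows "\<exists>z\<in>Vn n. dot a z \<and> \<not> dot b z"
proof -
  obtain i where i: "i < n" "a!i \<noteq> b!i"
  proof (rule ccontr)
    assume "\<not> thesis"
    then have "a = b" using assms(1,2) that by (intro veq[of _ n]) auto
    then show False using assms by simp
  qed
  obtain j where j: "j < n" "a!j" using nonzero_idx assms by blast
  show ?thesis
  proof (cases "a!i")
    case True then show ?thesis using i assms by (intro bexI[of _ "ev n i"]) auto
  next
    case False
    show ?thesis
    proof (cases "b!j")
      case False then show ?thesis using j assms by (intro bexI[of _ "ev n j"]) auto
    next
      case True
      have "i \<noteq> j" using False j by auto
      then show ?thesis using i j True False assms
        by (intro bexI[of _ "vadd (ev n i) (ev n j)"]) (auto simp: dot_vadd)
    qed
  qed
qed

lemma half_card:
  assumes fA: "finite A" and BA: "B \<subseteq> A" and fA1: "\<And>x. x \<in> A \<Longrightarrow> f x \<in> A"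
    and ff: "\<And>x. x \<in> A \<Longrightarrow> f (f x) = x"
    and fB: "\<And>x. x \<in> A \<Longrightarrow> x \<in> B \<longleftrightarrow> f x \<notin> B"
  shows "card A = 2 * card B"
proof -
  have "A - B = f ` B"
  proof
    show "A - B \<subseteq> f ` B"
    proof
      fix x assume x: "x \<in> A - B"
      then have "f x \<in> B" using fB[of x] by blast
      moreover have "f (f x) = x" using ff x by blast
      ultimately show "x \<in> f ` B" by (metis imageI)
    qed
    show "f ` B \<subseteq> A - B"
    proof
      fix y assume "y \<in> f ` B"
      then obtain x where x: "x \<in> B" "y = f x" by blast
      then have "x \<in> A" using BA by blast
      then show "y \<in> A - B" using fA1 fB x by blast
    qed
  qed
  moreover have "inj_on f B"
  proof (rule inj_onI)
    fix x y assume "x \<in> B" "y \<in> B" "f x = f y"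
    then show "x = y" using ff BA by (metis subsetD)
  qed
  ultimately have "card (A - B) = card B" by (simp add: card_image)
  moreover have "card A = card B + card (A - B)"
    using fA BA by (metis card_Diff_subset card_mono le_add_diff_inverse finite_subset)
  ultimately show ?thesis by simp
qed

definition Kset :: "nat \<Rightarrow> bool list \<Rightarrow> bool list \<Rightarrow> bool list set" where
  "Kset n a b = {x \<in> Vn n. \<not> dot a x \<and> \<not> dot b x}"

lemma card_H: assumes "a \<in> Vn n" "a \<noteq> zv n" shows "card {x \<in> Vn n. \<not> dot a x} * 2 = 2^n"
proof -
  obtain z where z: "z \<in> Vn n" "dot a z" using exz[OF assms(1) zv_V(1) assms(2) assms(2)] by auto
  have "card (Vn n) = 2 * card {x \<in> Vn n. \<not> dot a x}"
    by (rule half_card[where f="\<lambda>x. vadd x z"]) (use z assms in \<open>auto simp: dot_vadd\<close>)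
  then show ?thesis by (simp add: card_V)
qed

lemma card_K: assumes "a \<in> Vn n" "b \<in> Vn n" "a \<noteq> zv n" "b \<noteq> zv n" "a \<noteq> b"
  shows "card (Kset n a b) * 4 = 2^n"
proof -
  obtain z where z: "z \<in> Vn n" "dot b z" "\<not> dot a z" using exz[of b n a] assms by auto
  have "card {x \<in> Vn n. \<not> dot a x} = 2 * card (Kset n a b)"
    by (rule half_card[where f="\<lambda>x. vadd x z"]) (use z assms in \<open>auto simp: dot_vadd Kset_def\<close>)
  then show ?thesis using card_H[OF assms(1,3)] by simp
qed

definition subgrp :: "nat \<Rightarrow> bool list set \<Rightarrow> bool" where
  "subgrp n W \<longleftrightarrow> W \<subseteq> Vn n \<and> zv n \<in> W \<and> (\<forall>x\<in>W. \<forall>y\<in>W. vadd x y \<in> W)"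
definition Sub4 :: "nat \<Rightarrow> bool list set set" where
  "Sub4 n = {W. subgrp n W \<and> card W * 4 = 2^n}"
definition Pairs :: "nat \<Rightarrow> (bool list \<times> bool list) set" where
  "Pairs n = {(a,b). a \<in> Vn n \<and> b \<in> Vn n \<and> a \<noteq> zv n \<and> b \<noteq> zv n \<and> a \<noteq> b}"

lemma Kset_V: "Kset n a b \<subseteq> Vn n" by (auto simp: Kset_def)

lemma K_Sub4: "(a,b) \<in> Pairs n \<Longrightarrow> Kset n a b \<in> Sub4 n"
  using card_K[of a n b] by (auto simp: Sub4_def subgrp_def Kset_def Pairs_def dot_vadd)

lemma ex_notin: "finite A \<Longrightarrow> card A < card B \<Longrightarrow> \<exists>x\<in>B. x \<notin> A"
proof (rule ccontr)
  assume "finite A" "card A < card B" "\<not> (\<exists>x\<in>B. x \<notin> A)"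
  then have "B \<subseteq> A" by blast
  then have "card B \<le> card A" using \<open>finite A\<close> by (rule card_mono[rotated])
  then show False using \<open>card A < card B\<close> by simp
qed

lemma sub4_ex:
  assumes W: "W \<in> Sub4 n"
  shows "\<exists>a b. a \<in> Vn n \<and> b \<in> Vn n \<and> a \<notin> W \<and> b \<notin> W \<and> vadd a b \<notin> W"
proof -
  have sg: "subgrp n W" and cW: "card W * 4 = 2^n" using W by (auto simp: Sub4_def)
  have WV: "W \<subseteq> Vn n" using sg by (simp add: subgrp_def)
  have add: "x \<in> W \<Longrightarrow> y \<in> W \<Longrightarrow> vadd x y \<in> W" for x y using sg by (simp add: subgrp_def)
  have p2: "(0::nat) < 2^n" by simp
  have finW: "finite W" using finite_subset[OF WV] by simp
  have "card W < card (Vn n)" using cW card_V[of n] p2 by linarith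
  then obtain a where a: "a \<in> Vn n" "a \<notin> W" using ex_notin[OF finW] by blast
  let ?A = "W \<union> vadd a ` W"
  have "card ?A \<le> card W + card (vadd a ` W)" by (rule card_Un_le)
  also have "\<dots> \<le> 2 * card W" using card_image_le[OF finW, of "vadd a"] by simp
  also have "\<dots> < card (Vn n)" using cW card_V[of n] p2 by linarith
  finally have "card ?A < card (Vn n)" .
  moreover have "finite ?A" using finW by simp
  ultimately obtain b where b: "b \<in> Vn n" "b \<notin> ?A"
    using ex_notin[of ?A "Vn n"] by blast
  have "vadd a b \<notin> W"
  proof
    assume "vadd a b \<in> W"
    then have "vadd a (vadd a b) \<in> vadd a ` W" by (rule imageI)
    moreover have "vadd a (vadd a b) = b" using a b by simp
    ultimately show False using b by simp
  qed
  then show ?thesis using a b by blast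
qed

lemma card_image_inj: "inj_on f A \<Longrightarrow> card (f ` A) = card A" by (simp add: card_image)

lemma sub4_K:
  assumes W: "W \<in> Sub4 n"
  shows "\<exists>u1 u2. (u1,u2) \<in> Pairs n \<and> W = Kset n u1 u2"
proof -
  have sg: "subgrp n W" and cW: "card W * 4 = 2^n" using W by (auto simp: Sub4_def)
  have WV: "W \<subseteq> Vn n" using sg by (simp add: subgrp_def)
  have add: "x \<in> W \<Longrightarrow> y \<in> W \<Longrightarrow> vadd x y \<in> W" for x y using sg by (simp add: subgrp_def)
  have z: "zv n \<in> W" using sg by (simp add: subgrp_def)
  have finW: "finite W" using finite_subset[OF WV] by simp
  obtain a b where ab: "a \<in> Vn n" "b \<in> Vn n" "a \<notin> W" "b \<notin> W" "vadd a b \<notin> W"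
    using sub4_ex[OF W] by blast
  have la: "length a = n" and lb: "length b = n" using ab by auto
  have indep: "vadd (smul s a) (smul t b) \<in> W \<Longrightarrow> \<not> s \<and> \<not> t" for s t
    using ab z by (cases s; cases t) auto
  have uniq: "s = s' \<and> t = t'" if "v \<in> Vn n" "vadd v (vadd (smul s a) (smul t b)) \<in> W"
     "vadd v (vadd (smul s' a) (smul t' b)) \<in> W" for v s t s' t'
  proof -
    have "vadd (vadd v (vadd (smul s a) (smul t b))) (vadd v (vadd (smul s' a) (smul t' b)))
       = vadd (smul (s \<noteq> s') a) (smul (t \<noteq> t') b)"
      using that la lb by (intro veq[of _ n]) (simp_all, argo)
    then have "vadd (smul (s \<noteq> s') a) (smul (t \<noteq> t') b) \<in> W" using add that by metis
    then show ?thesis using indep by blast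
  qed
  define F where "F = (\<lambda>(s,t,w). vadd (vadd (smul s a) (smul t b)) w)"
  have Fw: "vadd (F (s,t,w)) (vadd (smul s a) (smul t b)) = w" if "w \<in> W" for s t w
  proof -
    have "length w = n" using that WV by auto
    then show ?thesis using la lb apply (intro veq[of _ n]) apply (simp_all add: F_def) apply argo done
  qed
  have FV: "F (s,t,w) \<in> Vn n" if "w \<in> W" for s t w
  proof -
    have "length w = n" using that WV by auto
    then show ?thesis using la lb by (auto simp: F_def)
  qed
  have injF: "inj_on F (UNIV \<times> UNIV \<times> W)"
  proof (rule inj_onI)
    fix x y assume x: "x \<in> UNIV \<times> UNIV \<times> W" and y: "y \<in> UNIV \<times> UNIV \<times> W" and exy: "F x = F y"
    obtain s t w where xx: "x = (s,t,w)" by (cases x) auto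
    obtain s' t' w' where yy: "y = (s',t',w')" by (cases y) auto
    have w: "w \<in> W" "w' \<in> W" using x y xx yy by auto
    have e: "F (s,t,w) = F (s',t',w')" using exy xx yy by simp
    have e1: "vadd (F (s,t,w)) (vadd (smul s a) (smul t b)) \<in> W" using Fw[OF w(1)] w(1) by simp
    have e2: "vadd (F (s,t,w)) (vadd (smul s' a) (smul t' b)) \<in> W" using Fw[OF w(2)] w(2) e by simp
    have st: "s = s' \<and> t = t'" using uniq[OF FV[OF w(1)] e1 e2] .
    have "w = vadd (F (s,t,w)) (vadd (smul s a) (smul t b))" using Fw[OF w(1)] by simp
    also have "\<dots> = vadd (F (s',t',w')) (vadd (smul s' a) (smul t' b))" using e st by simp
    also have "\<dots> = w'" using Fw[OF w(2)] by simp
    finally have "w = w'" .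
    then show "x = y" using st xx yy by simp
  qed
  have cardF: "card (F ` (UNIV \<times> UNIV \<times> W)) = card (Vn n)"
    using card_image[OF injF] cW card_V[of n] by (simp add: card_cartesian_product)
  have FVs: "F ` (UNIV \<times> UNIV \<times> W) \<subseteq> Vn n" using FV by auto
  have Feq: "F ` (UNIV \<times> UNIV \<times> W) = Vn n" by (rule card_subset_eq[OF finite_V FVs cardF])
  have rep: "\<exists>s t. vadd v (vadd (smul s a) (smul t b)) \<in> W" if "v \<in> Vn n" for v
  proof -
    have "v \<in> F ` (UNIV \<times> UNIV \<times> W)" using that Feq by simp
    then obtain x where x: "x \<in> UNIV \<times> UNIV \<times> W" "v = F x" by blast
    obtain s t w where "x = (s,t,w)" by (cases x) auto
    then have "w \<in> W" "v = F (s,t,w)" using x by auto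
    then have "vadd v (vadd (smul s a) (smul t b)) \<in> W" using Fw by simp
    then show ?thesis by blast
  qed
  define p where "p v = (\<exists>t. vadd v (vadd (smul True a) (smul t b)) \<in> W)" for v
  define q where "q v = (\<exists>s. vadd v (vadd (smul s a) (smul True b)) \<in> W)" for v
  have rep_pq: "p v = s \<and> q v = t" if "v \<in> Vn n" "vadd v (vadd (smul s a) (smul t b)) \<in> W" for v s t
  proof -
    have "p v = s"
    proof
      assume "p v" then obtain t' where "vadd v (vadd (smul True a) (smul t' b)) \<in> W" by (auto simp: p_def)
      then show s using uniq[OF that(1) that(2), of True t'] by simp
    next
      assume s then show "p v" using that by (auto simp: p_def)
    qed
    moreover have "q v = t"
    proof
      assume "q v" then obtain s' where "vadd v (vadd (smul s' a) (smul True b)) \<in> W" by (auto simp: q_def)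
      then show t using uniq[OF that(1) that(2), of s' True] by simp
    next
      assume t then show "q v" using that by (auto simp: q_def)
    qed
    ultimately show ?thesis by simp
  qed
  have padd: "p (vadd x y) = (p x \<noteq> p y) \<and> q (vadd x y) = (q x \<noteq> q y)" if xv: "x \<in> Vn n" and yv: "y \<in> Vn n" for x y
  proof -
    obtain s1 t1 where r1: "vadd x (vadd (smul s1 a) (smul t1 b)) \<in> W" using rep[OF xv] by blast
    obtain s2 t2 where r2: "vadd y (vadd (smul s2 a) (smul t2 b)) \<in> W" using rep[OF yv] by blast
    have "vadd (vadd x (vadd (smul s1 a) (smul t1 b))) (vadd y (vadd (smul s2 a) (smul t2 b)))
      = vadd (vadd x y) (vadd (smul (s1 \<noteq> s2) a) (smul (t1 \<noteq> t2) b))"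
      using xv yv la lb apply (intro veq[of _ n]) apply simp_all apply argo done
    then have "vadd (vadd x y) (vadd (smul (s1 \<noteq> s2) a) (smul (t1 \<noteq> t2) b)) \<in> W"
      using add[OF r1 r2] by simp
    then have "p (vadd x y) = (s1 \<noteq> s2) \<and> q (vadd x y) = (t1 \<noteq> t2)"
      using rep_pq[of "vadd x y"] xv yv by simp
    moreover have "p x = s1 \<and> q x = t1" using rep_pq[OF xv r1] .
    moreover have "p y = s2 \<and> q y = t2" using rep_pq[OF yv r2] .
    ultimately show ?thesis by simp
  qed
  have "\<exists>u\<in>Vn n. \<forall>x\<in>Vn n. p x = dot u x" by (rule func_rep) (use padd in simp)
  then obtain u1 where u1: "u1 \<in> Vn n" "\<forall>x\<in>Vn n. p x = dot u1 x" by blast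
  have "\<exists>u\<in>Vn n. \<forall>x\<in>Vn n. q x = dot u x" by (rule func_rep) (use padd in simp)
  then obtain u2 where u2: "u2 \<in> Vn n" "\<forall>x\<in>Vn n. q x = dot u2 x" by blast
  have "vadd a (vadd (smul True a) (smul False b)) = zv n" using la lb by (intro veq) auto
  then have "p a \<and> \<not> q a" using rep_pq[of a True False] ab z by simp
  then have ua: "dot u1 a" "\<not> dot u2 a" using u1 u2 ab by auto
  have "vadd b (vadd (smul False a) (smul True b)) = zv n" using la lb by (intro veq) auto
  then have "\<not> p b \<and> q b" using rep_pq[of b False True] ab z by simp
  then have ub: "dot u2 b" using u2 ab by auto
  have "u1 \<noteq> zv n" "u2 \<noteq> zv n" "u1 \<noteq> u2" using ua ub by auto
  then have "(u1,u2) \<in> Pairs n" using u1(1) u2(1) by (simp add: Pairs_def)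
  moreover have "W = Kset n u1 u2"
  proof
    show "W \<subseteq> Kset n u1 u2"
    proof
      fix x assume x: "x \<in> W"
      then have xv: "x \<in> Vn n" using WV by auto
      have "vadd x (vadd (smul False a) (smul False b)) = x" using la lb xv by (intro veq) auto
      then have "\<not> p x \<and> \<not> q x" using rep_pq[of x False False] xv x by simp
      then show "x \<in> Kset n u1 u2" using u1 u2 xv by (auto simp: Kset_def)
    qed
    show "Kset n u1 u2 \<subseteq> W"
    proof
      fix x assume x: "x \<in> Kset n u1 u2"
      then have xv: "x \<in> Vn n" and pq: "\<not> p x" "\<not> q x" using u1 u2 by (auto simp: Kset_def)
      obtain s t where r: "vadd x (vadd (smul s a) (smul t b)) \<in> W" using rep xv by blast
      then have "\<not> s" "\<not> t" using rep_pq[OF xv r] pq by auto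
      moreover have "vadd x (vadd (smul False a) (smul False b)) = x" using la lb xv by (intro veq) auto
      ultimately show "x \<in> W" using r by simp
    qed
  qed
  ultimately show ?thesis by blast
qed

lemma vanish:
  assumes ab: "(a,b) \<in> Pairs n" and u: "u \<in> Vn n" and van: "\<And>x. x \<in> Kset n a b \<Longrightarrow> \<not> dot u x"
  shows "u \<in> {zv n, a, b, vadd a b}"
proof -
  have av: "a \<in> Vn n" "b \<in> Vn n" "a \<noteq> zv n" "b \<noteq> zv n" "a \<noteq> b" using ab by (auto simp: Pairs_def)
  obtain z1 where z1: "z1 \<in> Vn n" "dot a z1" "\<not> dot b z1" using exz[of a n b] av by blast
  obtain z2 where z2: "z2 \<in> Vn n" "dot b z2" "\<not> dot a z2" using exz[of b n a] av by metis
  define c1 where "c1 = dot u z1"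
  define c2 where "c2 = dot u z2"
  define w where "w = vadd (smul c1 a) (smul c2 b)"
  have wv: "w \<in> Vn n" using av by (simp add: w_def)
  have "u = w"
  proof (rule dot_inj[OF u wv])
    fix x assume x: "x \<in> Vn n"
    define x' where "x' = vadd x (vadd (smul (dot a x) z1) (smul (dot b x) z2))"
    have x'v: "x' \<in> Vn n" using x z1 z2 by (simp add: x'_def)
    have "dot a x' = False" "dot b x' = False" using x z1 z2 av by (auto simp: x'_def dot_vadd dot_smul)
    then have "x' \<in> Kset n a b" using x'v by (simp add: Kset_def)
    then have "\<not> dot u x'" by (rule van)
    moreover have "dot u x' = (dot u x \<noteq> ((dot a x \<and> c1) \<noteq> (dot b x \<and> c2)))"
      using x z1 z2 av u by (simp add: x'_def dot_vadd dot_smul c1_def c2_def)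
    moreover have "dot w x = ((c1 \<and> dot a x) \<noteq> (c2 \<and> dot b x))"
      using x av by (simp add: w_def dot_vadd1 dot_smul1)
    ultimately show "dot u x = dot w x" by blast
  qed
  then show ?thesis using av by (cases c1; cases c2) (auto simp: w_def)
qed

lemma K_sub: assumes "(a,b) \<in> Pairs n" "x \<in> {a, b, vadd a b}" "y \<in> {a, b, vadd a b}"
  shows "Kset n a b \<subseteq> Kset n x y"
proof
  fix v assume v: "v \<in> Kset n a b"
  have l: "length a = n" "length b = n" "length v = n" using assms v by (auto simp: Pairs_def Kset_def)
  have d: "\<not> dot a v" "\<not> dot b v" "\<not> dot (vadd a b) v" using v l by (auto simp: Kset_def dot_vadd1)
  have "\<not> dot x v" using assms(2) d by blast
  moreover have "\<not> dot y v" using assms(3) d by blast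
  ultimately show "v \<in> Kset n x y" using l by (simp add: Kset_def)
qed

lemma cv_lemma: assumes "(a,b) \<in> Pairs n"
  shows "vadd a b \<in> Vn n" "vadd a b \<noteq> zv n" "vadd a b \<noteq> a" "vadd a b \<noteq> b"
proof -
  have av: "length a = n" "length b = n" "a \<noteq> zv n" "b \<noteq> zv n" "a \<noteq> b" using assms by (auto simp: Pairs_def)
  show "vadd a b \<in> Vn n" using av by simp
  show "vadd a b \<noteq> zv n" using av vadd_eq_zv[of a n b] by simp
  show "vadd a b \<noteq> a"
  proof
    assume "vadd a b = a"
    then have "vadd a (vadd a b) = vadd a a" by simp
    then show False using av by simp
  qed
  show "vadd a b \<noteq> b"
  proof
    assume "vadd a b = b"
    then have "vadd (vadd a b) b = vadd b b" by simp
    then show False using av by simp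
  qed
qed

lemma fiber:
  assumes ab: "(a,b) \<in> Pairs n"
  shows "{p \<in> Pairs n. Kset n (fst p) (snd p) = Kset n a b} =
     {(a,b),(b,a),(a,vadd a b),(vadd a b,a),(b,vadd a b),(vadd a b,b)}" (is "?L = ?R")
proof -
  have av: "a \<in> Vn n" "b \<in> Vn n" "a \<noteq> zv n" "b \<noteq> zv n" "a \<noteq> b" using ab by (auto simp: Pairs_def)
  note cv = cv_lemma[OF ab]
  have cK: "card (Kset n a b) * 4 = 2^n" using card_K av by blast
  have L: "?L \<subseteq> ?R"
  proof
    fix p assume p: "p \<in> ?L"
    obtain u1 u2 where pp: "p = (u1,u2)" by (cases p)
    have u: "(u1,u2) \<in> Pairs n" "Kset n u1 u2 = Kset n a b" using p pp by auto
    have "u1 \<in> {zv n, a, b, vadd a b}" 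
      by (rule vanish[OF ab]) (use u in \<open>auto simp: Pairs_def Kset_def\<close>)
    moreover have "u2 \<in> {zv n, a, b, vadd a b}" 
      by (rule vanish[OF ab]) (use u in \<open>auto simp: Pairs_def Kset_def\<close>)
    ultimately show "p \<in> ?R" using u(1) pp by (auto simp: Pairs_def)
  qed
  have R: "?R \<subseteq> ?L"
  proof
    fix p assume p: "p \<in> ?R"
    obtain x y where pp: "p = (x,y)" by (cases p)
    have xy: "x \<in> {a, b, vadd a b}" "y \<in> {a, b, vadd a b}" "(x,y) \<in> Pairs n"
      using p pp av cv by (auto simp: Pairs_def)
    have "card (Kset n x y) * 4 = 2^n" using card_K xy(3) by (auto simp: Pairs_def)
    then have "Kset n a b = Kset n x y"
      using K_sub[OF ab xy(1,2)] cK by (intro card_subset_eq) (auto simp: Kset_def)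
    then show "p \<in> ?L" using xy pp by auto
  qed
  show ?thesis using L R by blast
qed

lemma card_fiber:
  assumes ab: "(a,b) \<in> Pairs n"
  shows "card {p \<in> Pairs n. Kset n (fst p) (snd p) = Kset n a b} = 6"
proof -
  have av: "a \<in> Vn n" "b \<in> Vn n" "a \<noteq> zv n" "b \<noteq> zv n" "a \<noteq> b" using ab by (auto simp: Pairs_def)
  have cv: "vadd a b \<noteq> a" "vadd a b \<noteq> b" using cv_lemma[OF ab] by auto
  show ?thesis unfolding fiber[OF ab] using av cv by auto
qed

lemma finite_Pairs: "finite (Pairs n)"
  by (rule finite_subset[of _ "Vn n \<times> Vn n"]) (auto simp: Pairs_def)

lemma card_Pairs: "card (Pairs n) = (2^n - 1) * (2^n - 2)"
proof -
  have e: "Pairs n = (SIGMA a:(Vn n - {zv n}). (Vn n - {zv n, a}))" by (auto simp: Pairs_def)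
  have c1: "card (Vn n - {zv n}) = 2^n - 1" using card_V[of n] by simp
  have c2: "card (Vn n - {zv n, a}) = 2^n - 2" if "a \<in> Vn n - {zv n}" for a
  proof -
    have "card {zv n, a} = 2" using that by auto
    then show ?thesis using that card_V[of n] by (subst card_Diff_subset) auto
  qed
  have "card (Pairs n) = (\<Sum>a\<in>Vn n - {zv n}. card (Vn n - {zv n, a}))" unfolding e by simp
  also have "\<dots> = (\<Sum>a\<in>Vn n - {zv n}. 2^n - 2)" using c2 by (rule sum.cong[OF refl])
  also have "\<dots> = (2^n - 1) * (2^n - 2)" using c1 by simp
  finally show ?thesis .
qed

lemma Sub4_eq: "Sub4 n = (\<lambda>p. Kset n (fst p) (snd p)) ` Pairs n"
proof
  show "Sub4 n \<subseteq> (\<lambda>p. Kset n (fst p) (snd p)) ` Pairs n"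
  proof
    fix W assume "W \<in> Sub4 n"
    then have "\<exists>u1 u2. (u1,u2) \<in> Pairs n \<and> W = Kset n u1 u2" by (rule sub4_K)
    then obtain u1 u2 where u: "(u1,u2) \<in> Pairs n" "W = Kset n u1 u2" by blast
    have "W = (\<lambda>p. Kset n (fst p) (snd p)) (u1,u2)" using u by simp
    then show "W \<in> (\<lambda>p. Kset n (fst p) (snd p)) ` Pairs n" using u(1) by (rule image_eqI)
  qed
  show "(\<lambda>p. Kset n (fst p) (snd p)) ` Pairs n \<subseteq> Sub4 n"
  proof
    fix W assume "W \<in> (\<lambda>p. Kset n (fst p) (snd p)) ` Pairs n"
    then obtain p where "p \<in> Pairs n" "W = Kset n (fst p) (snd p)" by blast
    then show "W \<in> Sub4 n" using K_Sub4[of "fst p" "snd p" n] by simp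
  qed
qed

lemma card_Sub4: "6 * card (Sub4 n) = (2^n - 1) * (2^n - 2)"
proof -
  define fib where "fib W = {p \<in> Pairs n. Kset n (fst p) (snd p) = W}" for W
  have finS: "finite (Sub4 n)" unfolding Sub4_eq using finite_Pairs by simp
  have "bij_betw (\<lambda>p. (Kset n (fst p) (snd p), p)) (Pairs n) (SIGMA W:Sub4 n. fib W)"
  proof (rule bij_betwI[where g=snd])
    show "(\<lambda>p. (Kset n (fst p) (snd p), p)) \<in> Pairs n \<rightarrow> (SIGMA W:Sub4 n. fib W)"
    proof
      fix p assume p: "p \<in> Pairs n"
      then have "Kset n (fst p) (snd p) \<in> Sub4 n" unfolding Sub4_eq by (rule imageI)
      then show "(Kset n (fst p) (snd p), p) \<in> (SIGMA W:Sub4 n. fib W)" using p by (simp add: fib_def)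
    qed
    show "snd \<in> (SIGMA W:Sub4 n. fib W) \<rightarrow> Pairs n" by (auto simp: fib_def)
  qed (auto simp: fib_def)
  then have "card (Pairs n) = card (SIGMA W:Sub4 n. fib W)" by (rule bij_betw_same_card)
  also have "\<dots> = (\<Sum>W\<in>Sub4 n. card (fib W))"
    using finS finite_Pairs by (simp add: fib_def)
  also have "\<dots> = (\<Sum>W\<in>Sub4 n. 6)"
  proof (rule sum.cong[OF refl])
    fix W assume "W \<in> Sub4 n"
    then obtain p where p: "p \<in> Pairs n" "W = Kset n (fst p) (snd p)" unfolding Sub4_eq by blast
    then show "card (fib W) = 6" using card_fiber[of "fst p" "snd p" n] by (simp add: fib_def)
  qed
  finally show ?thesis using card_Pairs[of n] by simp
qed

lemma mult_BG: "f \<in> Bij S \<Longrightarrow> h \<in> Bij S \<Longrightarrow> f \<otimes>\<^bsub>BijGroup S\<^esub> h = compose S f h"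
  by (simp add: BijGroup_def)
lemma one_BG: "\<one>\<^bsub>BijGroup S\<^esub> = (\<lambda>x\<in>S. x)" by (simp add: BijGroup_def)
lemma carrier_BG: "carrier (BijGroup S) = Bij S" by (simp add: BijGroup_def)

definition gen :: "bool list set \<Rightarrow> bool list \<Rightarrow> bool list \<Rightarrow> bool" where
  "gen W x y \<longleftrightarrow> x \<notin> W \<and> y \<notin> W \<and> vadd x y \<notin> W"
definition fW :: "nat \<Rightarrow> bool list set \<Rightarrow> bool list \<Rightarrow> bool list \<Rightarrow> (bool list \<Rightarrow> bool list)" where
  "fW n W d y = (\<lambda>x\<in>Vn n. vadd (vadd x y) (if gen W x y then d else zv n))"
definition Psi :: "nat \<Rightarrow> bool list set \<Rightarrow> bool list \<Rightarrow> (bool list \<Rightarrow> bool list) set" where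
  "Psi n W d = fW n W d ` Vn n"

definition Sset :: "nat \<Rightarrow> (bool list \<Rightarrow> bool list) set set" where
  "Sset n = {R. elementary_abelian_subgroup R (BijGroup (Vn n)) \<and> regular_on (Vn n) R
                 \<and> card (transl_group n) = 4 * card (R \<inter> transl_group n)}"

lemma transl_zv: "v \<in> Vn n \<Longrightarrow> transl n v (zv n) = v" by (simp add: transl_def)
lemma inj_transl: "inj_on (transl n) (Vn n)"
  by (rule inj_onI) (metis transl_zv)
lemma card_T: "card (transl_group n) = 2^n"
  by (simp add: transl_group_def card_image[OF inj_transl] card_V)

locale PD =
  fixes n u1 u2 d
  assumes P: "(u1,u2) \<in> Pairs n" and dK: "d \<in> Kset n u1 u2" and d0: "d \<noteq> zv n"
begin

definition bt where "bt x y = ((dot u1 x \<and> dot u2 y) \<noteq> (dot u2 x \<and> dot u1 y))"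
definition g where "g y x = vadd (vadd x y) (smul (bt x y) d)"
definition rho where "rho y = restrict (g y) (Vn n)"

lemma lens: "length u1 = n" "length u2 = n" "length d = n" "u1 \<noteq> zv n" "u2 \<noteq> zv n" "u1 \<noteq> u2"
  "\<not> dot u1 d" "\<not> dot u2 d"
  using P dK by (auto simp: Pairs_def Kset_def)

lemma gen_bt: "x \<in> Vn n \<Longrightarrow> y \<in> Vn n \<Longrightarrow> gen (Kset n u1 u2) x y = bt x y"
  using lens by (auto simp: gen_def Kset_def bt_def dot_vadd)

lemma bt_add1: "x \<in> Vn n \<Longrightarrow> z \<in> Vn n \<Longrightarrow> bt (vadd x z) y = (bt x y \<noteq> bt z y)"
  using lens by (simp add: bt_def dot_vadd) argo
lemma bt_add2: "x \<in> Vn n \<Longrightarrow> z \<in> Vn n \<Longrightarrow> bt y (vadd x z) = (bt y x \<noteq> bt y z)"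
  using lens by (simp add: bt_def dot_vadd) argo
lemma bt_sym: "bt x y = bt y x" by (auto simp: bt_def)
lemma bt_self[simp]: "bt x x = False" by (auto simp: bt_def)
lemma bt_d[simp]: "bt d y = False" "bt y d = False" using lens by (auto simp: bt_def)
lemma bt_zv[simp]: "bt (zv n) y = False" "bt y (zv n) = False" by (auto simp: bt_def)
lemma bt_smul: "bt (smul c d) y = False"
  by (cases c) (simp_all add: lens)

lemma g_V[simp]: "x \<in> Vn n \<Longrightarrow> y \<in> Vn n \<Longrightarrow> g y x \<in> Vn n"
  using lens by (simp add: g_def)

lemma length_g[simp]: "length x = n \<Longrightarrow> length y = n \<Longrightarrow> length (g y x) = n"
  using lens by (simp add: g_def)

lemma g_sym: "g y x = g x y"
  by (simp add: g_def bt_sym vadd_comm)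

lemma g_inv: "x \<in> Vn n \<Longrightarrow> y \<in> Vn n \<Longrightarrow> g y (g y x) = x"
proof -
  assume x: "x \<in> Vn n" and y: "y \<in> Vn n"
  have "bt (g y x) y = bt x y"
    using x y lens by (simp add: g_def bt_add1 bt_smul)
  then show ?thesis using x y lens
    by (simp add: g_def) (intro veq[of _ n], simp_all, blast)
qed

lemma g_comp: "x \<in> Vn n \<Longrightarrow> y \<in> Vn n \<Longrightarrow> z \<in> Vn n \<Longrightarrow> g y (g z x) = g (g y z) x"
proof -
  assume x: "x \<in> Vn n" and y: "y \<in> Vn n" and z: "z \<in> Vn n"
  have e1: "bt (g z x) y = (bt x y \<noteq> bt z y)"
    using x y z lens by (simp add: g_def bt_add1 bt_smul)
  have e2: "bt x (g y z) = (bt x z \<noteq> bt x y)"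
    using x y z lens by (simp add: g_def bt_add2 bt_sym[of _ "smul _ _"] bt_smul)
  show ?thesis using x y z lens e1 e2 bt_sym[of z y]
    by (simp add: g_def) (intro veq[of _ n], simp_all, blast)
qed

lemma g_zv: "x \<in> Vn n \<Longrightarrow> g (zv n) x = x" "x \<in> Vn n \<Longrightarrow> g x (zv n) = x"
  using lens by (simp_all add: g_def)
lemma g_self: "x \<in> Vn n \<Longrightarrow> g x x = zv n"
  using lens by (simp add: g_def)

lemma fW_rho: "y \<in> Vn n \<Longrightarrow> fW n (Kset n u1 u2) d y = rho y"
  unfolding fW_def rho_def g_def
  by (rule restrict_ext) (use lens in \<open>auto simp: gen_bt\<close>)

lemma Psi_rho: "Psi n (Kset n u1 u2) d = rho ` Vn n"
  unfolding Psi_def using fW_rho by (simp add: image_def)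

lemma rho_Bij: "y \<in> Vn n \<Longrightarrow> rho y \<in> Bij (Vn n)"
  unfolding Bij_def rho_def
  by (auto intro!: bij_betwI[where g="g y"] simp: g_inv)

lemma rho_mult: "y \<in> Vn n \<Longrightarrow> z \<in> Vn n \<Longrightarrow> rho y \<otimes>\<^bsub>BijGroup (Vn n)\<^esub> rho z = rho (g y z)"
proof -
  assume y: "y \<in> Vn n" and z: "z \<in> Vn n"
  have "compose (Vn n) (rho y) (rho z) = rho (g y z)"
    unfolding compose_def rho_def
    by (rule restrict_ext) (use y z in \<open>simp add: g_comp\<close>)
  then show ?thesis using mult_BG[OF rho_Bij[OF y] rho_Bij[OF z]] by simp
qed

lemma rho_one: "rho (zv n) = \<one>\<^bsub>BijGroup (Vn n)\<^esub>"
  by (auto simp: one_BG rho_def g_zv)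

lemma rho_zv: "y \<in> Vn n \<Longrightarrow> rho y (zv n) = y" by (simp add: rho_def g_zv)

lemma rho_transl: assumes y: "y \<in> Vn n" shows "rho y \<in> transl_group n \<longleftrightarrow> y \<in> Kset n u1 u2"
proof
  assume "rho y \<in> transl_group n"
  then obtain v where v: "v \<in> Vn n" "rho y = transl n v" by (auto simp: transl_group_def)
  then have "v = y" using rho_zv[OF y] transl_zv[OF v(1)] by simp
  have e: "g y x = vadd x y" if x: "x \<in> Vn n" for x
  proof -
    have "rho y x = transl n v x" using v(2) by simp
    then show ?thesis using x \<open>v = y\<close> by (simp add: rho_def transl_def)
  qed
  have nb: "\<not> bt x y" if x: "x \<in> Vn n" for x
  proof
    assume "bt x y"
    then have "vadd (vadd x y) d = vadd x y" using e[OF x] by (simp add: g_def)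
    then have "vadd (vadd x y) (vadd (vadd x y) d) = vadd (vadd x y) (vadd x y)" by simp
    then show False using x y lens d0 by simp
  qed
  obtain z1 where z1: "z1 \<in> Vn n" "dot u1 z1" "\<not> dot u2 z1" using exz[of u1 n u2] lens by auto
  obtain z2 where z2: "z2 \<in> Vn n" "dot u2 z2" "\<not> dot u1 z2" using exz[of u2 n u1] lens by auto
  have "\<not> dot u2 y" using nb[OF z1(1)] z1 by (simp add: bt_def)
  moreover have "\<not> dot u1 y" using nb[OF z2(1)] z2 by (simp add: bt_def)
  ultimately show "y \<in> Kset n u1 u2" using y by (simp add: Kset_def)
next
  assume yk: "y \<in> Kset n u1 u2"
  then have "rho y = transl n y"
    using lens by (auto simp: rho_def transl_def g_def bt_def Kset_def)
  then show "rho y \<in> transl_group n" using y by (simp add: transl_group_def)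
qed

lemma Psi_in: "Psi n (Kset n u1 u2) d \<in> Sset n"
proof -
  let ?G = "BijGroup (Vn n)"
  let ?R = "rho ` Vn n"
  interpret G: group ?G by (rule group_BijGroup)
  have sub: "subgroup ?R ?G"
  proof (rule G.subgroupI)
    show "?R \<subseteq> carrier ?G" using rho_Bij by (auto simp: carrier_BG)
    show "?R \<noteq> {}" using zv_V(1) by blast
  next
    fix a assume "a \<in> ?R"
    then obtain y where y: "y \<in> Vn n" "a = rho y" by blast
    have "rho y \<otimes>\<^bsub>?G\<^esub> rho y = \<one>\<^bsub>?G\<^esub>" using y by (simp add: rho_mult g_self rho_one)
    then have "inv\<^bsub>?G\<^esub> (rho y) = rho y" using rho_Bij[OF y(1)] by (intro G.inv_equality) (auto simp: carrier_BG)
    then show "inv\<^bsub>?G\<^esub> a \<in> ?R" using y by simp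
  next
    fix a b assume "a \<in> ?R" "b \<in> ?R"
    then obtain y z where "y \<in> Vn n" "a = rho y" "z \<in> Vn n" "b = rho z" by blast
    then show "a \<otimes>\<^bsub>?G\<^esub> b \<in> ?R" using g_V by (simp add: rho_mult)
  qed
  have ea: "elementary_abelian_subgroup ?R ?G"
    unfolding elementary_abelian_subgroup_def
    using sub by (auto simp: rho_mult g_sym g_self rho_one)
  have reg: "regular_on (Vn n) ?R"
    unfolding regular_on_def
  proof (intro ballI)
    fix x y assume x: "x \<in> Vn n" and y: "y \<in> Vn n"
    show "\<exists>!f. f \<in> ?R \<and> f x = y"
    proof (rule ex1I[where a="rho (g x y)"])
      show "rho (g x y) \<in> ?R \<and> rho (g x y) x = y"
        using x y by (simp add: rho_def g_sym[of "g x y" x] g_inv)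
    next
      fix f assume "f \<in> ?R \<and> f x = y"
      then obtain z where z: "z \<in> Vn n" "f = rho z" "g z x = y" using x by (auto simp: rho_def)
      then have "z = g x y" using x g_inv[OF z(1) x] g_sym[of z x] by simp
      then show "f = rho (g x y)" using z by simp
    qed
  qed
  have "?R \<inter> transl_group n = rho ` Kset n u1 u2"
    using rho_transl by (auto simp: Kset_def)
  also have "\<dots> = transl n ` Kset n u1 u2"
  proof -
    have "rho y = transl n y" if "y \<in> Kset n u1 u2" for y
      using that lens by (auto simp: rho_def transl_def g_def bt_def Kset_def)
    then show ?thesis by (simp add: image_def)
  qed
  finally have "card (?R \<inter> transl_group n) = card (Kset n u1 u2)"
    using card_image[OF inj_on_subset[OF inj_transl Kset_V]] by simp
  then have "card (transl_group n) = 4 * card (?R \<inter> transl_group n)"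
    using card_K[of u1 n u2] lens P card_T[of n] by (simp add: Pairs_def)
  then show ?thesis using ea reg by (simp add: Sset_def Psi_rho)
qed

lemma recover: "{w \<in> Vn n. transl n w \<in> Psi n (Kset n u1 u2) d} = Kset n u1 u2"
proof -
  have "transl n w \<in> rho ` Vn n \<longleftrightarrow> w \<in> Kset n u1 u2" if w: "w \<in> Vn n" for w
  proof
    assume "transl n w \<in> rho ` Vn n"
    then obtain y where y: "y \<in> Vn n" "transl n w = rho y" by blast
    then have "w = y" using transl_zv[OF w] rho_zv[OF y(1)] by metis
    have "rho y = transl n y" using y \<open>w = y\<close> by simp
    then have "rho y \<in> transl_group n" using y(1) unfolding transl_group_def by (metis imageI)
    then show "w \<in> Kset n u1 u2" using rho_transl[OF y(1)] \<open>w = y\<close> by simp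
  next
    assume wk: "w \<in> Kset n u1 u2"
    then have "rho w = transl n w"
      using lens by (auto simp: rho_def transl_def g_def bt_def Kset_def)
    then show "transl n w \<in> rho ` Vn n" using w by (metis imageI)
  qed
  then show ?thesis unfolding Psi_rho using Kset_V[of n u1 u2] by blast
qed

end


locale PC =
  fixes n R
  assumes RS: "R \<in> Sset n"
begin

abbreviation "G \<equiv> BijGroup (Vn n)"

lemma props: "subgroup R G" "\<And>x y. x \<in> R \<Longrightarrow> y \<in> R \<Longrightarrow> x \<otimes>\<^bsub>G\<^esub> y = y \<otimes>\<^bsub>G\<^esub> x"
  "\<And>x. x \<in> R \<Longrightarrow> x \<otimes>\<^bsub>G\<^esub> x = \<one>\<^bsub>G\<^esub>" "regular_on (Vn n) R"
  "card (transl_group n) = 4 * card (R \<inter> transl_group n)"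
  using RS by (auto simp: Sset_def elementary_abelian_subgroup_def)

lemma RB: "f \<in> R \<Longrightarrow> f \<in> Bij (Vn n)"
  using subgroup.subset[OF props(1)] by (auto simp: carrier_BG)

lemma fV: "f \<in> R \<Longrightarrow> x \<in> Vn n \<Longrightarrow> f x \<in> Vn n"
  using RB Bij_imp_funcset by blast

lemma mulR: "f \<in> R \<Longrightarrow> h \<in> R \<Longrightarrow> compose (Vn n) f h \<in> R"
  using subgroup.m_closed[OF props(1)] mult_BG RB by metis

lemma commR: "f \<in> R \<Longrightarrow> h \<in> R \<Longrightarrow> x \<in> Vn n \<Longrightarrow> f (h x) = h (f x)"
proof -
  assume a: "f \<in> R" "h \<in> R" "x \<in> Vn n"
  have "compose (Vn n) f h = compose (Vn n) h f" using props(2)[OF a(1,2)] mult_BG RB a by metis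
  then have "compose (Vn n) f h x = compose (Vn n) h f x" by simp
  then show ?thesis using a(3) by (simp add: compose_def)
qed

lemma invR: "f \<in> R \<Longrightarrow> x \<in> Vn n \<Longrightarrow> f (f x) = x"
proof -
  assume a: "f \<in> R" "x \<in> Vn n"
  have "compose (Vn n) f f = (\<lambda>x\<in>Vn n. x)" using props(3)[OF a(1)] mult_BG RB a one_BG by metis
  then have "compose (Vn n) f f x = (\<lambda>x\<in>Vn n. x) x" by simp
  then show ?thesis using a(2) by (simp add: compose_def)
qed

lemma oneR: "(\<lambda>x\<in>Vn n. x) \<in> R"
  using subgroup.one_closed[OF props(1)] one_BG by metis

definition r where "r y = (THE f. f \<in> R \<and> f (zv n) = y)"

lemma ex1R: "y \<in> Vn n \<Longrightarrow> \<exists>!f. f \<in> R \<and> f (zv n) = y"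
  using props(4) zv_V(1) unfolding regular_on_def by blast

lemma r_prop: "y \<in> Vn n \<Longrightarrow> r y \<in> R \<and> r y (zv n) = y"
  unfolding r_def by (rule theI'[OF ex1R])

lemma r_uniq: "f \<in> R \<Longrightarrow> f = r (f (zv n))"
proof -
  assume f: "f \<in> R"
  have v: "f (zv n) \<in> Vn n" using fV[OF f] by simp
  show ?thesis unfolding r_def
    by (rule the_equality[symmetric]) (use f v ex1R[OF v] in auto)
qed

lemma rR: "y \<in> Vn n \<Longrightarrow> r y \<in> R" using r_prop by blast
lemma r0: "y \<in> Vn n \<Longrightarrow> r y (zv n) = y" using r_prop by blast
lemma rV: "x \<in> Vn n \<Longrightarrow> y \<in> Vn n \<Longrightarrow> r y x \<in> Vn n" using fV rR by blast

lemma R_eq: "R = r ` Vn n"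
proof
  show "R \<subseteq> r ` Vn n"
  proof
    fix f assume f: "f \<in> R"
    have "f (zv n) \<in> Vn n" using fV[OF f] by simp
    then show "f \<in> r ` Vn n" using r_uniq[OF f] by (metis imageI)
  qed
  show "r ` Vn n \<subseteq> R" using rR by blast
qed

lemma r_comp: "x \<in> Vn n \<Longrightarrow> y \<in> Vn n \<Longrightarrow> z \<in> Vn n \<Longrightarrow> r y (r z x) = r (r y z) x"
proof -
  assume a: "x \<in> Vn n" "y \<in> Vn n" "z \<in> Vn n"
  have m: "compose (Vn n) (r y) (r z) \<in> R" using mulR rR a by blast
  have "compose (Vn n) (r y) (r z) (zv n) = r y z" using a r0 by (simp add: compose_def)
  then have "compose (Vn n) (r y) (r z) = r (r y z)" using r_uniq[OF m] by simp
  then have "compose (Vn n) (r y) (r z) x = r (r y z) x" by simp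
  then show ?thesis using a by (simp add: compose_def)
qed

lemma r_sym: "x \<in> Vn n \<Longrightarrow> y \<in> Vn n \<Longrightarrow> r y x = r x y"
  using commR[OF rR rR, of y x "zv n"] r0 by simp

lemma r_inv: "x \<in> Vn n \<Longrightarrow> y \<in> Vn n \<Longrightarrow> r y (r y x) = x"
  using invR rR by blast

lemma r_self: "x \<in> Vn n \<Longrightarrow> r x x = zv n"
  using r_inv[of "zv n" x] r0 by simp

lemma r_cancel: "x \<in> Vn n \<Longrightarrow> y \<in> Vn n \<Longrightarrow> z \<in> Vn n \<Longrightarrow> r x y = r x z \<Longrightarrow> y = z"
  by (metis r_inv)

definition W where "W = {w \<in> Vn n. transl n w \<in> R}"

lemma WV: "W \<subseteq> Vn n" by (auto simp: W_def)

lemma tW: "w \<in> W \<Longrightarrow> r w = transl n w"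
proof -
  assume w: "w \<in> W"
  then have "transl n w \<in> R" "w \<in> Vn n" by (auto simp: W_def)
  then show ?thesis using r_uniq transl_zv by metis
qed

lemma tW': "w \<in> W \<Longrightarrow> x \<in> Vn n \<Longrightarrow> r w x = vadd x w"
  using tW by (simp add: transl_def)

lemma W_sub: "W \<in> Sub4 n"
proof -
  have z: "zv n \<in> W"
  proof -
    have "transl n (zv n) = (\<lambda>x\<in>Vn n. x)" unfolding transl_def by (rule restrict_ext) simp
    then show ?thesis using oneR by (simp add: W_def)
  qed
  have add: "vadd x y \<in> W" if "x \<in> W" "y \<in> W" for x y
  proof -
    have xy: "x \<in> Vn n" "y \<in> Vn n" "transl n x \<in> R" "transl n y \<in> R" using that by (auto simp: W_def)
    have "compose (Vn n) (transl n x) (transl n y) = transl n (vadd x y)"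
      unfolding compose_def transl_def by (rule restrict_ext) (use xy in \<open>simp add: vadd_ac\<close>)
    then show ?thesis using mulR[OF xy(3,4)] xy by (simp add: W_def)
  qed
  have "R \<inter> transl_group n = transl n ` W" by (auto simp: W_def transl_group_def)
  then have "card (R \<inter> transl_group n) = card W"
    using card_image[OF inj_on_subset[OF inj_transl WV]] by simp
  then have "card W * 4 = 2^n" using props(5) card_T[of n] by simp
  then show ?thesis using z add WV by (simp add: Sub4_def subgrp_def)
qed


definition uu where "uu = (SOME p. p \<in> Pairs n \<and> W = Kset n (fst p) (snd p))"

lemma uu: "uu \<in> Pairs n" "W = Kset n (fst uu) (snd uu)"
proof -
  obtain u1 u2 where "(u1,u2) \<in> Pairs n" "W = Kset n u1 u2" using sub4_K[OF W_sub] by blast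
  then have "\<exists>p. p \<in> Pairs n \<and> W = Kset n (fst p) (snd p)" by (metis fst_conv snd_conv)
  from someI_ex[OF this] show "uu \<in> Pairs n" "W = Kset n (fst uu) (snd uu)" by (simp_all add: uu_def)
qed

abbreviation "u1 \<equiv> fst uu"
abbreviation "u2 \<equiv> snd uu"

lemma ul: "length u1 = n" "length u2 = n" "u1 \<noteq> zv n" "u2 \<noteq> zv n" "u1 \<noteq> u2"
  using uu(1) by (auto simp: Pairs_def)

lemma inW: "v \<in> Vn n \<Longrightarrow> v \<in> W \<longleftrightarrow> \<not> dot u1 v \<and> \<not> dot u2 v"
  using uu(2) by (simp add: Kset_def)

definition D where "D x y = vadd (vadd (r y x) x) y"

lemma rD: "x \<in> Vn n \<Longrightarrow> y \<in> Vn n \<Longrightarrow> r y x = vadd (vadd x y) (D x y)"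
  using rV[of x y] by (simp add: D_def) (intro veq[of _ n]; auto)

lemma DV: "x \<in> Vn n \<Longrightarrow> y \<in> Vn n \<Longrightarrow> D x y \<in> Vn n"
  using rV[of x y] by (simp add: D_def)

lemma D_sym: "x \<in> Vn n \<Longrightarrow> y \<in> Vn n \<Longrightarrow> D x y = D y x"
  by (simp add: D_def r_sym[of x y] vadd_ac)

lemma shiftW: "w \<in> W \<Longrightarrow> x \<in> Vn n \<Longrightarrow> y \<in> Vn n \<Longrightarrow> r y (vadd x w) = vadd (r y x) w"
proof -
  assume a: "w \<in> W" "x \<in> Vn n" "y \<in> Vn n"
  have wv: "w \<in> Vn n" using a WV by auto
  have "r y (vadd x w) = r y (r w x)" using tW' a by simp
  also have "\<dots> = r w (r y x)" using commR[OF rR[OF a(3)] rR[OF wv] a(2)] .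
  also have "\<dots> = vadd (r y x) w" using tW'[OF a(1) rV[OF a(2,3)]] .
  finally show ?thesis .
qed

lemma D_triv: assumes x: "x \<in> Vn n" and y: "y \<in> Vn n" and ng: "\<not> gen W x y" shows "D x y = zv n"
proof -
  have "r y x = vadd x y"
  proof (cases "y \<in> W")
    case True then show ?thesis using tW' x by simp
  next
    case yW: False
    show ?thesis
    proof (cases "x \<in> W")
      case True then show ?thesis using tW' y r_sym[OF x y] vadd_comm by metis
    next
      case xW: False
      then have w: "vadd x y \<in> W" using ng yW by (simp add: gen_def)
      have "vadd x (vadd x y) = y" using x y by simp
      then have "r y x = r x (vadd x (vadd x y))" using r_sym[OF x y] by simp
      also have "\<dots> = vadd (r x x) (vadd x y)" using shiftW[OF w x x] .
      also have "\<dots> = vadd x y" using r_self[OF x] x y by simp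
      finally show ?thesis .
    qed
  qed
  then show ?thesis using x y by (simp add: D_def) (intro veq[of _ n]; auto)
qed

lemma D_gen: assumes x: "x \<in> Vn n" and y: "y \<in> Vn n" and g: "gen W x y" shows "D x y \<in> W"
proof -
  have xW: "x \<notin> W" and yW: "y \<notin> W" and xyW: "vadd x y \<notin> W" using g by (auto simp: gen_def)
  define z where "z = r y x"
  have zv: "z \<in> Vn n" using rV x y by (simp add: z_def)
  have a: "z \<notin> W"
  proof
    assume zW: "z \<in> W"
    have "r z y = r y z" using r_sym zv y by metis
    also have "\<dots> = x" using r_inv x y by (simp add: z_def)
    finally have "x = vadd y z" using tW'[OF zW y] by simp
    then have "vadd x y = z" using y zv by (simp add: vadd_ac)
    then show False using zW xyW by simp
  qed
  have b: "vadd z x \<notin> W"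
  proof
    assume wW: "vadd z x \<in> W"
    have "z = vadd x (vadd z x)" using x zv by (simp add: vadd_ac)
    also have "\<dots> = r (vadd z x) x" using tW'[OF wW x] by simp
    also have "\<dots> = r x (vadd z x)" using r_sym x wW WV by blast
    finally have "r x (vadd z x) = r x y" using r_sym[OF x y] by (simp add: z_def)
    then have "vadd z x = y" using r_cancel x y wW WV by blast
    then show False using wW yW by simp
  qed
  have c: "vadd z y \<notin> W"
  proof
    assume wW: "vadd z y \<in> W"
    have "z = vadd y (vadd z y)" using y zv by (simp add: vadd_ac)
    also have "\<dots> = r (vadd z y) y" using tW'[OF wW y] by simp
    also have "\<dots> = r y (vadd z y)" using r_sym y wW WV by blast
    finally have "r y (vadd z y) = r y x" by (simp add: z_def)
    then have "vadd z y = x" using r_cancel x y wW WV by blast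
    then show False using wW xW by simp
  qed
  have l: "length x = n" "length y = n" "length z = n" using x y zv by auto
  have "\<not> dot u1 (vadd (vadd z x) y) \<and> \<not> dot u2 (vadd (vadd z x) y)"
    using a b c xW yW xyW inW x y zv l ul by (simp add: dot_vadd) blast
  then show ?thesis using inW l by (simp add: D_def z_def)
qed

lemma D_in: "x \<in> Vn n \<Longrightarrow> y \<in> Vn n \<Longrightarrow> D x y \<in> W"
  using D_gen D_triv uu(2) by (cases "gen W x y") (auto simp: Kset_def)


lemma D_shift: "w \<in> W \<Longrightarrow> x \<in> Vn n \<Longrightarrow> y \<in> Vn n \<Longrightarrow> D (vadd x w) y = D x y"
proof -
  assume a: "w \<in> W" "x \<in> Vn n" "y \<in> Vn n"
  have l: "length w = n" "length (r y x) = n" using a WV rV by auto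
  show ?thesis using shiftW[OF a] a l by (simp add: D_def) (intro veq[of _ n]; auto)
qed

lemma D_self: "x \<in> Vn n \<Longrightarrow> D x x = zv n"
  by (simp add: D_def r_self)

lemma D_zv: "y \<in> Vn n \<Longrightarrow> D (zv n) y = zv n"
proof -
  assume y: "y \<in> Vn n"
  have "zv n \<in> W" using inW by simp
  then show ?thesis using D_triv[OF zv_V(1) y] by (simp add: gen_def)
qed

lemma cocycle: assumes x: "x \<in> Vn n" and y: "y \<in> Vn n" and z: "z \<in> Vn n"
  shows "vadd (D (vadd x y) z) (D x y) = vadd (D (vadd y z) x) (D y z)"
proof -
  have xy: "vadd x y \<in> Vn n" and yz: "vadd y z \<in> Vn n" using x y z by auto
  have "r z (r y x) = r z (vadd (vadd x y) (D x y))" using rD x y by simp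
  also have "\<dots> = vadd (r z (vadd x y)) (D x y)" using shiftW[OF D_in[OF x y] xy z] .
  also have "\<dots> = vadd (vadd (vadd (vadd x y) z) (D (vadd x y) z)) (D x y)" using rD[OF xy z] by simp
  finally have e1: "r z (r y x) = vadd (vadd (vadd (vadd x y) z) (D (vadd x y) z)) (D x y)" .
  have "r (r z y) x = r x (r z y)" using r_sym x rV y z by blast
  also have "\<dots> = r x (vadd (vadd y z) (D y z))" using rD y z by simp
  also have "\<dots> = vadd (r x (vadd y z)) (D y z)" using shiftW[OF D_in[OF y z] yz x] .
  also have "\<dots> = vadd (vadd (vadd (vadd y z) x) (D (vadd y z) x)) (D y z)" using rD[OF yz x] by simp
  finally have e2: "r (r z y) x = vadd (vadd (vadd (vadd y z) x) (D (vadd y z) x)) (D y z)" .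
  have E: "vadd (vadd (vadd (vadd x y) z) (D (vadd x y) z)) (D x y)
     = vadd (vadd (vadd (vadd y z) x) (D (vadd y z) x)) (D y z)" using e1 e2 r_comp[OF x z y] by simp
  have l: "length (D (vadd x y) z) = n" "length (D x y) = n" "length (D (vadd y z) x) = n" "length (D y z) = n"
    using DV x y z xy yz by auto
  show ?thesis
  proof (rule veq[of _ n])
    fix i assume i: "i < n"
    have "vadd (vadd (vadd (vadd x y) z) (D (vadd x y) z)) (D x y) ! i
     = vadd (vadd (vadd (vadd y z) x) (D (vadd y z) x)) (D y z) ! i" using E by simp
    then show "vadd (D (vadd x y) z) (D x y) ! i = vadd (D (vadd y z) x) (D y z) ! i"
      using i l x y z by simp blast
  qed (use l in auto)
qed

lemma D_special: "a \<in> Vn n \<Longrightarrow> b \<in> Vn n \<Longrightarrow> D (vadd a b) a = D a b"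
proof -
  assume a: "a \<in> Vn n" and b: "b \<in> Vn n"
  have "vadd (D (vadd a a) b) (D a a) = vadd (D (vadd a b) a) (D a b)" using cocycle[OF a a b] .
  then have "vadd (D (vadd a b) a) (D a b) = zv n" using a b D_zv D_self by simp
  then show ?thesis using vadd_eq_zv[of "D (vadd a b) a" n "D a b"] DV a b by simp
qed

lemma D_cls: assumes x: "x \<in> Vn n" and x': "x' \<in> Vn n" and y: "y \<in> Vn n"
  and e: "dot u1 x = dot u1 x'" "dot u2 x = dot u2 x'"
  shows "D x' y = D x y"
proof -
  have w: "vadd x x' \<in> W" using inW x x' e by (simp add: dot_vadd ul)
  have "x' = vadd x (vadd x x')" using x x' by simp
  then show ?thesis using D_shift[OF w x y] by simp
qed

lemma D_const: "\<exists>d. d \<in> W \<and> d \<noteq> zv n \<and> (\<forall>x\<in>Vn n. \<forall>y\<in>Vn n. D x y = (if gen W x y then d else zv n))"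
proof -
  obtain z1 where z1: "z1 \<in> Vn n" "dot u1 z1" "\<not> dot u2 z1" using exz[of u1 n u2] ul by auto
  obtain z2 where z2: "z2 \<in> Vn n" "dot u2 z2" "\<not> dot u1 z2" using exz[of u2 n u1] ul by auto
  define z3 where "z3 = vadd z1 z2"
  have z3: "z3 \<in> Vn n" "dot u1 z3" "dot u2 z3" using z1 z2 ul by (auto simp: z3_def dot_vadd)
  define d where "d = D z1 z2"
  have d6: "D z1 z2 = d" "D z2 z1 = d" "D z3 z1 = d" "D z1 z3 = d" "D z3 z2 = d" "D z2 z3 = d"
  proof -
    show 1: "D z1 z2 = d" by (simp add: d_def)
    show 2: "D z2 z1 = d" using D_sym z1 z2 1 by metis
    show 3: "D z3 z1 = d" using D_special[OF z1(1) z2(1)] 1 by (simp add: z3_def)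
    show "D z1 z3 = d" using D_sym z1 z3 3 by metis
    have "z3 = vadd z2 z1" by (simp add: z3_def vadd_comm)
    then show 5: "D z3 z2 = d" using D_special[OF z2(1) z1(1)] 2 by simp
    show "D z2 z3 = d" using D_sym z2 z3 5 by metis
  qed
  define rp where "rp x = (if dot u1 x then (if dot u2 x then z3 else z1) else z2)" for x
  have rp: "rp x \<in> Vn n" "dot u1 (rp x) = dot u1 x" "dot u2 (rp x) = dot u2 x"
    if "x \<in> Vn n" "dot u1 x \<or> dot u2 x" for x
    using that z1 z2 z3 by (auto simp: rp_def)
  have gd: "D x y = d" if x: "x \<in> Vn n" and y: "y \<in> Vn n" and g: "gen W x y" for x y
  proof -
    have c: "dot u1 x \<or> dot u2 x" "dot u1 y \<or> dot u2 y" "dot u1 x \<noteq> dot u1 y \<or> dot u2 x \<noteq> dot u2 y"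
      using g inW x y by (auto simp: gen_def dot_vadd ul)
    have "D x y = D (rp x) y" using D_cls[OF x rp(1)[OF x c(1)] y] rp[OF x c(1)] by simp
    also have "\<dots> = D y (rp x)" using D_sym rp(1)[OF x c(1)] y by metis
    also have "\<dots> = D (rp y) (rp x)" using D_cls[OF y rp(1)[OF y c(2)] rp(1)[OF x c(1)]] rp[OF y c(2)] by simp
    also have "\<dots> = d" using c d6 by (auto simp: rp_def)
    finally show ?thesis .
  qed
  have all: "\<forall>x\<in>Vn n. \<forall>y\<in>Vn n. D x y = (if gen W x y then d else zv n)"
    using gd D_triv by simp
  have dW: "d \<in> W" using D_in z1 z2 by (simp add: d_def)
  have "d \<noteq> zv n"
  proof
    assume d0: "d = zv n"
    have "r z1 x = vadd x z1" if x: "x \<in> Vn n" for x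
      using rD[OF x z1(1)] all x z1 d0 by simp
    then have "r z1 = transl n z1"
      unfolding transl_def using RB[OF rR[OF z1(1)]] Bij_imp_extensional
      by (intro extensionalityI[where A="Vn n"]) auto
    then have "z1 \<in> W" using rR[OF z1(1)] z1(1) by (simp add: W_def)
    then show False using inW z1 by simp
  qed
  then show ?thesis using dW all by blast
qed


lemma R_Psi: "\<exists>d. d \<in> W \<and> d \<noteq> zv n \<and> R = Psi n W d"
proof -
  obtain d where d: "d \<in> W" "d \<noteq> zv n" "\<forall>x\<in>Vn n. \<forall>y\<in>Vn n. D x y = (if gen W x y then d else zv n)"
    using D_const by blast
  have "r y = fW n W d y" if y: "y \<in> Vn n" for y
  proof (rule extensionalityI[where A="Vn n"])
    show "r y \<in> extensional (Vn n)" using RB[OF rR[OF y]] Bij_imp_extensional by blast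
    show "fW n W d y \<in> extensional (Vn n)" by (simp add: fW_def)
    fix x assume x: "x \<in> Vn n"
    have "D x y = (if gen W x y then d else zv n)" using d(3) x y by blast
    then show "r y x = fW n W d y x" using rD[OF x y] x by (simp add: fW_def)
  qed
  then have "r ` Vn n = fW n W d ` Vn n" by (rule image_cong[OF refl])
  then have "R = Psi n W d" unfolding Psi_def using R_eq by simp
  then show ?thesis using d by blast
qed

end

definition Pset :: "nat \<Rightarrow> (bool list set \<times> bool list) set" where
  "Pset n = (SIGMA W:Sub4 n. W - {zv n})"

lemma S_sub: "Sset n \<subseteq> (\<lambda>(W,d). Psi n W d) ` Pset n"
proof
  fix R assume R: "R \<in> Sset n"
  interpret PC n R by unfold_locales (rule R)
  obtain d where d: "d \<in> W" "d \<noteq> zv n" "R = Psi n W d" using R_Psi by blast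
  then have "(W,d) \<in> Pset n" using W_sub by (simp add: Pset_def)
  moreover have "R = (\<lambda>(W,d). Psi n W d) (W,d)" using d(3) by simp
  ultimately show "R \<in> (\<lambda>(W,d). Psi n W d) ` Pset n" by (rule rev_image_eqI)
qed

lemma Pset_PD: assumes "(W,d) \<in> Pset n"
  shows "\<exists>u1 u2. W = Kset n u1 u2 \<and> PD n u1 u2 d"
proof -
  have W: "W \<in> Sub4 n" "d \<in> W" "d \<noteq> zv n" using assms by (auto simp: Pset_def)
  obtain u1 u2 where u: "(u1,u2) \<in> Pairs n" "W = Kset n u1 u2" using sub4_K[OF W(1)] by blast
  have "PD n u1 u2 d" using u W by unfold_locales auto
  then show ?thesis using u by blast
qed

lemma S_sup: "(\<lambda>(W,d). Psi n W d) ` Pset n \<subseteq> Sset n"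
proof
  fix R assume "R \<in> (\<lambda>(W,d). Psi n W d) ` Pset n"
  then obtain W d where Wd: "(W,d) \<in> Pset n" "R = Psi n W d" by auto
  obtain u1 u2 where u: "W = Kset n u1 u2" "PD n u1 u2 d" using Pset_PD[OF Wd(1)] by blast
  then show "R \<in> Sset n" using PD.Psi_in[OF u(2)] Wd(2) by simp
qed

lemma recover_W: "(W,d) \<in> Pset n \<Longrightarrow> {w \<in> Vn n. transl n w \<in> Psi n W d} = W"
proof -
  assume "(W,d) \<in> Pset n"
  then obtain u1 u2 where u: "W = Kset n u1 u2" "PD n u1 u2 d" using Pset_PD by blast
  show ?thesis using PD.recover[OF u(2)] u(1) by simp
qed

lemma fW_zv: "zv n \<in> W \<Longrightarrow> y \<in> Vn n \<Longrightarrow> fW n W d y (zv n) = y"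
  by (simp add: fW_def gen_def)

lemma inj_Psi_aux:
  assumes a: "(W,d) \<in> Pset n" "(W,d') \<in> Pset n" and e: "Psi n W d = Psi n W d'"
  shows "d = d'"
proof -
  have W: "W \<in> Sub4 n" "d \<in> W" "d' \<in> W" using a by (auto simp: Pset_def)
  have zW: "zv n \<in> W" using W(1) by (simp add: Sub4_def subgrp_def)
  have WV: "W \<subseteq> Vn n" using W(1) by (simp add: Sub4_def subgrp_def)
  obtain a b where ab: "a \<in> Vn n" "b \<in> Vn n" "a \<notin> W" "b \<notin> W" "vadd a b \<notin> W" using sub4_ex[OF W(1)] by blast
  have "fW n W d b \<in> Psi n W d" using ab(2) unfolding Psi_def by (rule imageI)
  then have "fW n W d b \<in> fW n W d' ` Vn n" using e by (simp add: Psi_def)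
  then obtain y where y: "y \<in> Vn n" "fW n W d b = fW n W d' y" by blast
  have "fW n W d b (zv n) = fW n W d' y (zv n)" using y(2) by simp
  then have "y = b" using fW_zv[OF zW] y(1) ab(2) by simp
  then have "fW n W d b a = fW n W d' b a" using y by simp
  then have "vadd (vadd a b) d = vadd (vadd a b) d'" using ab by (simp add: fW_def gen_def)
  then have "vadd (vadd a b) (vadd (vadd a b) d) = vadd (vadd a b) (vadd (vadd a b) d')" by simp
  moreover have "length d = n" "length d' = n" using W WV by auto
  moreover have "length (vadd a b) = n" using ab by simp
  ultimately show "d = d'" by simp
qed

lemma inj_Psi: "inj_on (\<lambda>(W,d). Psi n W d) (Pset n)"
proof (rule inj_onI)
  fix p q assume p: "p \<in> Pset n" and q: "q \<in> Pset n" and e0: "(\<lambda>(W,d). Psi n W d) p = (\<lambda>(W,d). Psi n W d) q"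
  obtain W d where pp: "p = (W,d)" by (cases p)
  obtain W' d' where qq: "q = (W',d')" by (cases q)
  have a: "(W,d) \<in> Pset n" "(W',d') \<in> Pset n" using p q pp qq by auto
  have e: "Psi n W d = Psi n W' d'" using e0 pp qq by simp
  have "W = W'" using recover_W[OF a(1)] recover_W[OF a(2)] e by simp
  then have "d = d'" using inj_Psi_aux[of W d n d'] a e by simp
  then show "p = q" using pp qq \<open>W = W'\<close> by simp
qed

lemma Sub4_props: "W \<in> Sub4 n \<Longrightarrow> finite W \<and> zv n \<in> W \<and> card W * 4 = 2^n"
proof -
  assume W: "W \<in> Sub4 n"
  then have "W \<subseteq> Vn n" "zv n \<in> W" "card W * 4 = 2^n" by (auto simp: Sub4_def subgrp_def)
  then show ?thesis using finite_subset[OF _ finite_V] by blast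
qed

lemma card_Sset: assumes n: "n \<ge> 2" shows "card (Sset n) = card (Sub4 n) * (2^(n-2) - 1)"
proof -
  have eq: "Sset n = (\<lambda>(W,d). Psi n W d) ` Pset n" by (rule equalityI[OF S_sub S_sup])
  have "card (Sset n) = card (Pset n)" unfolding eq by (rule card_image[OF inj_Psi])
  also have "\<dots> = (\<Sum>W\<in>Sub4 n. card (W - {zv n}))"
  proof -
    have f: "finite (Sub4 n)" unfolding Sub4_eq using finite_Pairs by (rule finite_imageI)
    have f2: "\<forall>W\<in>Sub4 n. finite (W - {zv n})" using Sub4_props by blast
    show ?thesis unfolding Pset_def by (rule card_SigmaI[OF f f2])
  qed
  also have "\<dots> = (\<Sum>W\<in>Sub4 n. 2^(n-2) - 1)"
  proof (rule sum.cong[OF refl])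
    fix W assume W: "W \<in> Sub4 n"
    have c: "card W * 4 = 2^n" "zv n \<in> W" "finite W" using Sub4_props[OF W] by auto
    obtain m where m: "n = m + 2" using n by (metis add.commute le_Suc_ex numeral_2_eq_2 add_2_eq_Suc)
    have "card W = 2^m" using c(1) unfolding m by (simp add: power_add)
    then have "card W = 2^(n-2)" using m by simp
    then show "card (W - {zv n}) = 2^(n-2) - 1" using c by (simp add: card_Diff_singleton)
  qed
  also have "\<dots> = card (Sub4 n) * (2^(n-2) - 1)" by simp
  finally show ?thesis .
qed


lemma arith_final:
  fixes N t :: nat
  assumes t: "t \<ge> 1" and h: "6 * N = (4*t - 1) * (4*t - 2)"
  shows "N * (t - 1) = ((t - 1) * (2*t - 1) * (4*t - 1)) div 3"
proof -
  have "4*t - 2 = 2 * (2*t - 1)" using t by simp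
  then have "6 * N = 2 * ((4*t - 1) * (2*t - 1))" using h by simp
  then have "3 * N = (4*t - 1) * (2*t - 1)" by simp
  then have h3: "(4*t - 1) * (2*t - 1) = 3 * N" by simp
  have "(t - 1) * (2*t - 1) * (4*t - 1) = (t - 1) * ((4*t - 1) * (2*t - 1))" by (simp only: ac_simps)
  also have "\<dots> = (t - 1) * (3 * N)" by (simp only: h3)
  also have "\<dots> = 3 * (N * (t - 1))" by (simp only: ac_simps)
  finally have X: "(t - 1) * (2*t - 1) * (4*t - 1) = 3 * (N * (t - 1))" .
  have "(3 * (N * (t - 1))) div 3 = N * (t - 1)" by simp
  then show ?thesis by (simp only: X)
qed

theorem mainTheorem9:
  fixes n :: nat
  assumes "n > 2"
  shows "card {R. elementary_abelian_subgroup R (BijGroup (Vn n)) \<and> regular_on (Vn n) R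
                 \<and> card (transl_group n) = 4 * card (R \<inter> transl_group n)}
         = ((2^(n-2) - 1) * (2^(n-1) - 1) * (2^n - 1)) div 3"
proof -
  obtain m where m: "n = m + 2" using assms by (metis add.commute less_imp_Suc_add numeral_2_eq_2 add_2_eq_Suc Suc_lessD)
  define t :: nat where "t = 2^m"
  have t1: "t \<ge> 1" by (simp add: t_def)
  have p: "(2::nat)^(n-2) = t" "(2::nat)^(n-1) = 2*t" "(2::nat)^n = 4*t"
    by (simp_all add: m t_def power_add)
  have "card {R. elementary_abelian_subgroup R (BijGroup (Vn n)) \<and> regular_on (Vn n) R
                 \<and> card (transl_group n) = 4 * card (R \<inter> transl_group n)} = card (Sset n)"
    by (simp add: Sset_def)
  also have "\<dots> = card (Sub4 n) * (t - 1)" using card_Sset[of n] assms p by simp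
  also have "\<dots> = ((t - 1) * (2*t - 1) * (4*t - 1)) div 3"
    using arith_final[OF t1, of "card (Sub4 n)"] card_Sub4[of n] p by simp
  also have "\<dots> = ((2^(n-2) - 1) * (2^(n-1) - 1) * (2^n - 1)) div 3" using p by simp
  finally show ?thesis .
qed

end
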